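(* Let $T$ be a tree on $n$ vertices. Then \[ D_{\max}(T)-\partial(T)\geq \frac{2n-2-\sqrt{4n^2-12n+12}}{2} \] and \[ 2D_{\max}(T)-\partial^Q(T)\geq \frac{3n-4-\sqrt{9n^2-32n+32}}{2}, \] with equality (in either inequality) if and only if $T\cong K_{1,n-1}$.
   Context: For a connected graph $G$ with vertex set $\{v_1,\dots,v_n\}$, the distance matrix $D(G)$ is the $n\times n$ matrix whose $(i,j)$-entry is the distance between $v_i$ and $v_j$, and $\partial(G)$ denotes its largest eigenvalue (the distance spectral radius). The transmission $D_i$ of $v_i$ is the $i$-th row sum of $D(G)$, and $D_{\max}(G)$ is the maximum transmission over all vertices. The distance signless Laplacian matrix is $Q(G)=D(G)+\mathrm{diag}(D_1,\dots,D_n)$, and $\partial^Q(G)$ denotes its largest eigenvalue. $K_{1,n-1}$ is the star on $n$ vertices. *)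

theory Defs
  imports "HOL-Analysis.Analysis"
begin

definition simple_graph :: "('v \<Rightarrow> 'v \<Rightarrow> bool) \<Rightarrow> bool" where
  "simple_graph E \<longleftrightarrow> (\<forall>u v. E u v \<longrightarrow> E v u) \<and> (\<forall>v. \<not> E v v)"

definition is_walk :: "('v \<Rightarrow> 'v \<Rightarrow> bool) \<Rightarrow> 'v list \<Rightarrow> bool" where
  "is_walk E xs \<longleftrightarrow> xs \<noteq> [] \<and> (\<forall>i. Suc i < length xs \<longrightarrow> E (xs ! i) (xs ! Suc i))"

definition graph_connected :: "('v \<Rightarrow> 'v \<Rightarrow> bool) \<Rightarrow> bool" where
  "graph_connected E \<longleftrightarrow>
     (\<forall>u v. \<exists>xs. is_walk E xs \<and> hd xs = u \<and> last xs = v)"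

definition is_cycle :: "('v \<Rightarrow> 'v \<Rightarrow> bool) \<Rightarrow> 'v list \<Rightarrow> bool" where
  "is_cycle E xs \<longleftrightarrow> length xs \<ge> 3 \<and> distinct xs \<and> is_walk E xs \<and> E (last xs) (hd xs)"

definition is_tree :: "('v \<Rightarrow> 'v \<Rightarrow> bool) \<Rightarrow> bool" where
  "is_tree E \<longleftrightarrow> simple_graph E \<and> graph_connected E \<and> (\<nexists>xs. is_cycle E xs)"

definition gdist :: "('v \<Rightarrow> 'v \<Rightarrow> bool) \<Rightarrow> 'v \<Rightarrow> 'v \<Rightarrow> nat" where
  "gdist E u v = (LEAST k. \<exists>xs. is_walk E xs \<and> hd xs = u \<and> last xs = v \<and> length xs = Suc k)"

definition dist_matrix :: "('v::finite \<Rightarrow> 'v \<Rightarrow> bool) \<Rightarrow> real^'v^'v" where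
  "dist_matrix E = (\<chi> i j. real (gdist E i j))"

definition transmission :: "('v::finite \<Rightarrow> 'v \<Rightarrow> bool) \<Rightarrow> 'v \<Rightarrow> real" where
  "transmission E i = (\<Sum>j\<in>UNIV. dist_matrix E $ i $ j)"

definition Dmax :: "('v::finite \<Rightarrow> 'v \<Rightarrow> bool) \<Rightarrow> real" where
  "Dmax E = Max (range (transmission E))"

definition dist_signless_laplacian :: "('v::finite \<Rightarrow> 'v \<Rightarrow> bool) \<Rightarrow> real^'v^'v" where
  "dist_signless_laplacian E =
     dist_matrix E + (\<chi> i j. if i = j then transmission E i else 0)"

text \<open>Largest (real) eigenvalue of a real square matrix (used for symmetric matrices,
  whose eigenvalues are all real).\<close>
definition largest_eigenvalue :: "real^'v^'v \<Rightarrow> real" where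
  "largest_eigenvalue A = Max {mu. \<exists>x. x \<noteq> 0 \<and> A *v x = mu *\<^sub>R x}"

definition is_star :: "('v \<Rightarrow> 'v \<Rightarrow> bool) \<Rightarrow> bool" where
  "is_star E \<longleftrightarrow> (\<exists>c. \<forall>u v. E u v \<longleftrightarrow> u \<noteq> v \<and> (u = c \<or> v = c))"

end

theory Submission
  imports Defs
begin


lemma is_walk_Cons:
  "is_walk E (y # xs) \<longleftrightarrow> (xs = [] \<or> (E y (hd xs) \<and> is_walk E xs))"
proof (cases xs)
  case Nil then show ?thesis by (simp add: is_walk_def)
next
  case (Cons a ys)
  show ?thesis
  proof
    assume w: "is_walk E (y # xs)"
    have "E y (hd xs)" using w Cons unfolding is_walk_def by (metis list.sel(1) length_Cons nth_Cons_0 nth_Cons_Suc zero_less_Suc Suc_less_eq)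
    moreover have "is_walk E xs" using w Cons unfolding is_walk_def
      by (metis length_Cons nth_Cons_Suc Suc_less_eq list.distinct(1))
    ultimately show "xs = [] \<or> (E y (hd xs) \<and> is_walk E xs)" by blast
  next
    assume h: "xs = [] \<or> (E y (hd xs) \<and> is_walk E xs)"
    then have h1: "E y (xs ! 0)" and h2: "is_walk E xs" using Cons by (auto simp: hd_conv_nth)
    show "is_walk E (y # xs)" unfolding is_walk_def
    proof (intro conjI allI impI)
      fix i assume "Suc i < length (y # xs)"
      then show "E ((y # xs) ! i) ((y # xs) ! Suc i)"
        using h1 h2 by (cases i) (auto simp: is_walk_def)
    qed simp
  qed
qed

lemma is_walk_single: "is_walk E [x]"
  by (simp add: is_walk_def)

lemma is_walk_take: "is_walk E xs \<Longrightarrow> 0 < k \<Longrightarrow> is_walk E (take k xs)"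
  unfolding is_walk_def by auto

lemma is_walk_tl: "is_walk E xs \<Longrightarrow> 2 \<le> length xs \<Longrightarrow> is_walk E (tl xs)"
  unfolding is_walk_def by (cases xs) auto

lemma is_walk_rev:
  assumes sym: "\<And>u v. E u v \<Longrightarrow> E v u" and w: "is_walk E xs"
  shows "is_walk E (rev xs)"
  unfolding is_walk_def
proof (intro conjI allI impI)
  show "rev xs \<noteq> []" using w by (simp add: is_walk_def)
  fix i assume i: "Suc i < length (rev xs)"
  let ?L = "length xs"
  have a: "rev xs ! i = xs ! (?L - 1 - i)" using i by (simp add: rev_nth)
  have b: "rev xs ! Suc i = xs ! (?L - 2 - i)" using i by (simp add: rev_nth)
  have "E (xs ! (?L - 2 - i)) (xs ! Suc (?L - 2 - i))"
    using w i unfolding is_walk_def by auto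
  moreover have "Suc (?L - 2 - i) = ?L - 1 - i" using i by simp
  ultimately show "E (rev xs ! i) (rev xs ! Suc i)" using a b sym by metis
qed

lemma gdist_walk:
  assumes "graph_connected E"
  shows "\<exists>xs. is_walk E xs \<and> hd xs = u \<and> last xs = v \<and> length xs = Suc (gdist E u v)"
proof -
  obtain xs where xs: "is_walk E xs" "hd xs = u" "last xs = v"
    using assms unfolding graph_connected_def by blast
  then have "xs \<noteq> []" by (simp add: is_walk_def)
  then have "length xs = Suc (length xs - 1)" by simp
  with xs have "\<exists>k xs. is_walk E xs \<and> hd xs = u \<and> last xs = v \<and> length xs = Suc k" by blast
  then show ?thesis unfolding gdist_def by (rule LeastI_ex)
qed

lemma gdist_le:
  assumes "is_walk E xs" "hd xs = u" "last xs = v"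
  shows "gdist E u v \<le> length xs - 1"
proof -
  have "xs \<noteq> []" using assms by (simp add: is_walk_def)
  then have "length xs = Suc (length xs - 1)" by simp
  with assms have "\<exists>ys. is_walk E ys \<and> hd ys = u \<and> last ys = v \<and> length ys = Suc (length xs - 1)" by blast
  then show ?thesis unfolding gdist_def by (rule Least_le)
qed

lemma gdist_self: "gdist E u u = 0"
proof -
  have "is_walk E [u]" by (simp add: is_walk_def)
  from gdist_le[OF this] show ?thesis by simp
qed

lemma gdist_0:
  assumes "graph_connected E" "gdist E u v = 0" shows "u = v"
proof -
  obtain xs where "is_walk E xs" "hd xs = u" "last xs = v" "length xs = Suc 0"
    using gdist_walk[OF assms(1), of u v] assms(2) by auto
  then show ?thesis by (cases xs) auto
qed

lemma gdist_edge_le: "E u v \<Longrightarrow> gdist E u v \<le> 1"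
proof -
  assume "E u v"
  then have "is_walk E [u, v]" by (simp add: is_walk_Cons is_walk_def)
  from gdist_le[OF this] show ?thesis by simp
qed

lemma gdist_1:
  assumes "graph_connected E" "gdist E u v = 1" shows "E u v"
proof -
  obtain xs where xs: "is_walk E xs" "hd xs = u" "last xs = v" "length xs = Suc (Suc 0)"
    using gdist_walk[OF assms(1), of u v] assms(2) by auto
  then obtain a b where "xs = [a, b]" by (metis length_0_conv length_Suc_conv)
  with xs show ?thesis by (simp add: is_walk_Cons)
qed

lemma gdist_sym:
  assumes sym: "\<And>u v. E u v \<Longrightarrow> E v u" and c: "graph_connected E"
  shows "gdist E u v = gdist E v u"
proof -
  have le: "gdist E a b \<le> gdist E b a" for a b
  proof -
    obtain xs where xs: "is_walk E xs" "hd xs = b" "last xs = a" "length xs = Suc (gdist E b a)"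
      using gdist_walk[OF c] by blast
    have "xs \<noteq> []" using xs by (simp add: is_walk_def)
    have "is_walk E (rev xs)" using is_walk_rev[OF sym xs(1)] by blast
    moreover have "hd (rev xs) = a" "last (rev xs) = b" using xs \<open>xs \<noteq> []\<close>
      by (auto simp: hd_rev last_rev)
    ultimately have "gdist E a b \<le> length (rev xs) - 1" by (rule gdist_le)
    then show ?thesis using xs by simp
  qed
  show ?thesis using le[of u v] le[of v u] by simp
qed

lemma gdist_leaf:
  assumes c: "graph_connected E" and leaf: "\<And>y. E u y \<longleftrightarrow> y = p" and j: "j \<noteq> u"
  shows "gdist E u j = Suc (gdist E p j)"
proof (rule antisym)
  obtain ys where ys: "is_walk E ys" "hd ys = p" "last ys = j" "length ys = Suc (gdist E p j)"
    using gdist_walk[OF c] by blast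
  have "is_walk E (u # ys)" using ys leaf by (simp add: is_walk_Cons)
  moreover have "ys \<noteq> []" using ys by auto
  ultimately have "gdist E u j \<le> length (u # ys) - 1" using ys by (intro gdist_le) auto
  then show "gdist E u j \<le> Suc (gdist E p j)" using ys by simp
next
  obtain xs where xs: "is_walk E xs" "hd xs = u" "last xs = j" "length xs = Suc (gdist E u j)"
    using gdist_walk[OF c] by blast
  have "gdist E u j \<noteq> 0" using gdist_self[of E u] j xs by (metis gdist_0 c)
  then have L: "2 \<le> length xs" using xs by simp
  then obtain y zs where xz: "xs = u # y # zs" using xs by (cases xs; cases "tl xs") auto
  then have "E u y" using xs by (simp add: is_walk_Cons)
  then have "y = p" using leaf by simp
  have "is_walk E (y # zs)" using xs xz by (simp add: is_walk_Cons)
  moreover have "last (y # zs) = j" using xs xz by simp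
  ultimately have "gdist E p j \<le> length (y # zs) - 1" using \<open>y = p\<close> by (intro gdist_le) auto
  then show "Suc (gdist E p j) \<le> gdist E u j" using xs xz by simp
qed

lemma longest_end:
  assumes sym: "\<And>u v. E u v \<Longrightarrow> E v u" and irr: "\<And>v. \<not> E v v"
    and acyc: "\<nexists>ys. is_cycle E ys"
    and xs: "is_walk E xs" "distinct xs"
    and mx: "\<And>ys. is_walk E ys \<Longrightarrow> distinct ys \<Longrightarrow> length ys \<le> length xs"
    and L: "2 \<le> length xs" and e: "E (hd xs) y"
  shows "y = xs ! 1"
proof (cases "y \<in> set xs")
  case False
  have "is_walk E (y # xs)" using xs e sym by (simp add: is_walk_Cons)
  moreover have "distinct (y # xs)" using False xs by simp
  ultimately have "length (y # xs) \<le> length xs" by (rule mx)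
  then show ?thesis by simp
next
  case True
  then obtain i where i: "i < length xs" "xs ! i = y" by (metis in_set_conv_nth)
  have hd0: "hd xs = xs ! 0" using L by (cases xs) auto
  consider "i = 0" | "i = 1" | "2 \<le> i" by linarith
  then show ?thesis
  proof cases
    case 1 then show ?thesis using e i hd0 irr by metis
  next
    case 2 then show ?thesis using i by simp
  next
    case 3
    let ?ys = "take (Suc i) xs"
    have "is_cycle E ?ys"
      unfolding is_cycle_def
    proof (intro conjI)
      show "3 \<le> length ?ys" using 3 i by simp
      show "distinct ?ys" using xs by simp
      show "is_walk E ?ys" using xs by (simp add: is_walk_take)
      have "?ys \<noteq> []" using i by (cases xs) auto
      then have "last ?ys = ?ys ! (length ?ys - 1)" by (rule last_conv_nth)
      also have "\<dots> = xs ! i" using i by simp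
      finally have "last ?ys = xs ! i" .
      moreover have "hd ?ys = hd xs" using i L by (simp add: hd_conv_nth)
      ultimately show "E (last ?ys) (hd ?ys)" using e i sym by simp
    qed
    then show ?thesis using acyc by blast
  qed
qed

lemma star_from_center:
  assumes c: "graph_connected E" and sym: "\<And>u v. E u v \<Longrightarrow> E v u" and irr: "\<And>v. \<not> E v v"
    and h: "\<And>y z. E ctr y \<Longrightarrow> E y z \<Longrightarrow> z = ctr"
  shows "is_star E"
proof -
  define S where "S = {ctr} \<union> {y. E ctr y}"
  have cl: "x \<in> S \<Longrightarrow> E x y \<Longrightarrow> y \<in> S" for x y
    using h unfolding S_def by auto
  have all: "v \<in> S" for v
  proof -
    obtain xs where xs: "is_walk E xs" "hd xs = ctr" "last xs = v"
      using c unfolding graph_connected_def by blast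
    have ne: "xs \<noteq> []" using xs by (simp add: is_walk_def)
    have "\<forall>i. i < length xs \<longrightarrow> xs ! i \<in> S"
    proof (intro allI)
      fix i show "i < length xs \<longrightarrow> xs ! i \<in> S"
      proof (induction i)
        case 0 then show ?case using xs ne by (simp add: hd_conv_nth S_def)
      next
        case (Suc i)
        then show ?case using cl xs(1) unfolding is_walk_def by auto
      qed
    qed
    then show ?thesis using xs ne by (metis last_conv_nth diff_less length_greater_0_conv zero_less_one)
  qed
  show ?thesis unfolding is_star_def
  proof (intro exI allI iffI)
    fix u v assume e: "E u v"
    show "u \<noteq> v \<and> (u = ctr \<or> v = ctr)"
    proof
      show "u \<noteq> v" using e irr by metis
      show "u = ctr \<or> v = ctr"
      proof (rule ccontr)
        assume nn: "\<not> (u = ctr \<or> v = ctr)"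
        then have "E ctr u" using all[of u] unfolding S_def by auto
        then show False using h e nn by blast
      qed
    qed
  next
    fix u v assume a: "u \<noteq> v \<and> (u = ctr \<or> v = ctr)"
    then show "E u v" using all[of u] all[of v] sym unfolding S_def by auto
  qed
qed

lemma tree_cases:
  fixes E :: "'v::finite \<Rightarrow> 'v \<Rightarrow> bool"
  assumes tree: "is_tree E" and n2: "2 \<le> CARD('v)"
  shows "is_star E \<or> (\<exists>u1 p1 u2 p2. (\<forall>y. E u1 y \<longleftrightarrow> y = p1) \<and> (\<forall>y. E u2 y \<longleftrightarrow> y = p2)
            \<and> p1 \<noteq> p2 \<and> 4 \<le> CARD('v))"
proof -
  have sym: "\<And>u v. E u v \<Longrightarrow> E v u" and irr: "\<And>v. \<not> E v v"
    and c: "graph_connected E" and acyc: "\<nexists>ys. is_cycle E ys"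
    using tree unfolding is_tree_def simple_graph_def by auto
  define P where "P = {xs :: 'v list. is_walk E xs \<and> distinct xs}"
  have "P \<subseteq> {xs. set xs \<subseteq> UNIV \<and> length xs \<le> CARD('v)}"
    unfolding P_def by (auto simp: distinct_card[symmetric] card_mono)
  then have finP: "finite P" using finite_lists_length_le[of "UNIV :: 'v set" "CARD('v)"]
    by (metis finite_subset finite)
  obtain u v :: 'v where uv: "u \<noteq> v"
  proof -
    have "\<not> (\<forall>u v :: 'v. u = v)"
    proof
      assume "\<forall>u v :: 'v. u = v"
      then have "UNIV = {undefined :: 'v}" by auto
      then have "card (UNIV :: 'v set) = card {undefined :: 'v}" by (rule arg_cong)
      then have "CARD('v) = 1" by simp
      then show False using n2 by simp
    qed
    then show ?thesis using that by blast
  qed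
  obtain ws where ws: "is_walk E ws" "hd ws = u" "last ws = v"
    using c unfolding graph_connected_def by blast
  have "ws \<noteq> []" using ws by (simp add: is_walk_def)
  then obtain a ws' where "ws = a # ws'" by (cases ws) auto
  moreover have "ws' \<noteq> []" using ws uv \<open>ws = a # ws'\<close> by auto
  ultimately obtain b rest where wsab: "ws = a # b # rest" by (cases ws') auto
  then have "E a b" using ws by (simp add: is_walk_Cons)
  then have "[a, b] \<in> P" unfolding P_def using irr by (auto simp: is_walk_Cons is_walk_def)
  then have Pne: "P \<noteq> {}" by auto
  define m where "m = Max (length ` P)"
  obtain xs where xsP: "xs \<in> P" and xsm: "length xs = m"
  proof -
    have "m \<in> length ` P" unfolding m_def using finP Pne by (intro Max_in) auto
    then show ?thesis using that by auto
  qed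
  have mx: "\<And>ys. is_walk E ys \<Longrightarrow> distinct ys \<Longrightarrow> length ys \<le> length xs"
    using xsm finP unfolding m_def P_def by (auto intro: Max_ge)
  have xs: "is_walk E xs" "distinct xs" using xsP P_def by auto
  have L2: "2 \<le> length xs" using mx[of "[a,b]"] \<open>[a, b] \<in> P\<close> unfolding P_def by auto
  have ne: "xs \<noteq> []" using L2 by auto
  have e01: "E (xs ! 0) (xs ! 1)" using xs L2 unfolding is_walk_def by auto
  have hd0: "hd xs = xs ! 0" using ne by (simp add: hd_conv_nth)
  have leaf1: "E (xs ! 0) y \<longleftrightarrow> y = xs ! 1" for y
    using longest_end[OF sym irr acyc xs mx L2, of y] e01 hd0 by auto
  have rxs: "is_walk E (rev xs)" "distinct (rev xs)" using xs is_walk_rev[OF sym] by auto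
  have mxr: "\<And>ys. is_walk E ys \<Longrightarrow> distinct ys \<Longrightarrow> length ys \<le> length (rev xs)" using mx by simp
  let ?L = "length xs"
  have r1: "rev xs ! 1 = xs ! (?L - 2)" using L2 by (simp add: rev_nth numeral_2_eq_2)
  have r0: "hd (rev xs) = xs ! (?L - 1)" using ne by (simp add: hd_rev last_conv_nth)
  have "Suc (?L - 2) < ?L" "Suc (?L - 2) = ?L - 1" using L2 by auto
  then have eL: "E (xs ! (?L - 2)) (xs ! (?L - 1))" using xs unfolding is_walk_def by metis
  have leaf2: "E (xs ! (?L - 1)) y \<longleftrightarrow> y = xs ! (?L - 2)" for y
    using longest_end[OF sym irr acyc rxs mxr _, of y] L2 r1 r0 eL sym by auto
  consider "?L = 2" | "?L = 3" | "4 \<le> ?L" using L2 by linarith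
  then show ?thesis
  proof cases
    case 1
    have "is_star E"
    proof (rule star_from_center[OF c sym irr, of "xs ! 0"])
      fix y z assume "E (xs ! 0) y" "E y z"
      then show "z = xs ! 0" using leaf1 leaf2 1 by auto
    qed
    then show ?thesis ..
  next
    case 2
    have "is_star E"
    proof (rule star_from_center[OF c sym irr, of "xs ! 1"])
      fix y z assume ey: "E (xs ! 1) y" and ez: "E y z"
      show "z = xs ! 1"
      proof (rule ccontr)
        assume zn: "z \<noteq> xs ! 1"
        have ya: "y \<noteq> xs ! 0" using ez zn leaf1 by auto
        have yc: "y \<noteq> xs ! 2" using ez zn leaf2 2 by auto
        have yb: "y \<noteq> xs ! 1" using ey irr by auto
        have za: "z \<noteq> xs ! 0" using ez leaf1 sym yb by blast
        have zy: "z \<noteq> y" using ez irr by auto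
        have "xs ! 1 \<noteq> xs ! 0" using xs(2) 2 nth_eq_iff_index_eq[of xs 1 0] by simp
        have "is_walk E [z, y, xs ! 1, xs ! 0]"
          using ez ey e01 sym by (simp add: is_walk_Cons is_walk_single)
        moreover have "distinct [z, y, xs ! 1, xs ! 0]"
          using ya yb za zy zn \<open>xs ! 1 \<noteq> xs ! 0\<close> by simp
        ultimately have "length [z, y, xs ! 1, xs ! 0] \<le> ?L" by (rule mx)
        then show False using 2 by simp
      qed
    qed
    then show ?thesis ..
  next
    case 3
    have "xs ! 1 \<noteq> xs ! (?L - 2)" using xs(2) 3 nth_eq_iff_index_eq[of xs 1 "?L - 2"] by simp
    moreover have "4 \<le> CARD('v)" using 3 distinct_card[OF xs(2)] card_mono[of UNIV "set xs"] by simp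
    ultimately show ?thesis using leaf1 leaf2 by blast
  qed
qed



lemma sym_inner:
  fixes A :: "real^'n^'n"
  assumes "transpose A = A" shows "(A *v x) \<bullet> y = x \<bullet> (A *v y)"
  by (metis assms dot_lmul_matrix vector_transpose_matrix)

lemma eig_orth:
  fixes A :: "real^'n^'n"
  assumes s: "transpose A = A" and x: "A *v x = mu *\<^sub>R x" and y: "A *v y = nu *\<^sub>R y"
    and ne: "mu \<noteq> nu"
  shows "x \<bullet> y = 0"
proof -
  have "mu * (x \<bullet> y) = nu * (x \<bullet> y)"
    using sym_inner[OF s, of x y] x y by simp
  then show ?thesis using ne by simp
qed

lemma finite_eigs:
  fixes A :: "real^'n^'n"
  assumes s: "transpose A = A"
  shows "finite {mu. \<exists>x. x \<noteq> 0 \<and> A *v x = mu *\<^sub>R x}"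
proof -
  define S where "S = {mu. \<exists>x. x \<noteq> 0 \<and> A *v x = mu *\<^sub>R x}"
  define v where "v mu = (SOME x. x \<noteq> 0 \<and> A *v x = mu *\<^sub>R x)" for mu
  have v: "v mu \<noteq> 0 \<and> A *v v mu = mu *\<^sub>R v mu" if "mu \<in> S" for mu
    using that unfolding S_def v_def by (metis (mono_tags, lifting) mem_Collect_eq someI_ex)
  have inj: "inj_on v S"
  proof (rule inj_onI)
    fix a b assume a: "a \<in> S" and b: "b \<in> S" and e: "v a = v b"
    then have "a *\<^sub>R v a = b *\<^sub>R v a" using v[OF a] v[OF b] by metis
    then show "a = b" using v[OF a] by simp
  qed
  have po: "pairwise orthogonal (v ` S)"
    unfolding pairwise_def orthogonal_def
  proof (intro ballI impI)
    fix x y assume "x \<in> v ` S" "y \<in> v ` S" "x \<noteq> y"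
    then obtain a b where ab: "a \<in> S" "b \<in> S" "x = v a" "y = v b" "a \<noteq> b" by auto
    then show "x \<bullet> y = 0" using eig_orth[OF s] v[OF ab(1)] v[OF ab(2)] by blast
  qed
  have "0 \<notin> v ` S" using v by auto
  then have "independent (v ` S)" using po pairwise_orthogonal_independent by blast
  then have "finite (v ` S)" by (rule independent_imp_finite)
  then have "finite S" using inj finite_imageD by blast
  then show ?thesis unfolding S_def .
qed

lemma eig_exists:
  fixes A :: "real^'n^'n"
  assumes s: "transpose A = A"
  shows "\<exists>mu x. x \<noteq> 0 \<and> A *v x = mu *\<^sub>R x"
proof -
  define q where "q x = x \<bullet> (A *v x)" for x :: "real^'n"
  have "axis undefined (1::real) \<in> sphere (0::real^'n) 1" by simp
  then have sne: "sphere (0::real^'n) 1 \<noteq> {}" by blast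
  have "continuous_on (sphere (0::real^'n) 1) q" unfolding q_def by (intro continuous_intros)
  then obtain x0 where x0: "x0 \<in> sphere 0 1" and mx: "\<forall>y\<in>sphere 0 1. q y \<le> q x0"
    using continuous_attains_sup[OF compact_sphere sne] by blast
  define m where "m = q x0"
  have nx0: "x0 \<bullet> x0 = 1" using x0 by (simp add: dot_square_norm)
  have qs: "q (c *\<^sub>R y) = c^2 * q y" for c y
    unfolding q_def by (simp add: matrix_vector_mult_scaleR power2_eq_square)
  have bound: "q y \<le> m * (y \<bullet> y)" for y
  proof (cases "y = 0")
    case True then show ?thesis by (simp add: q_def)
  next
    case False
    then have np: "norm y > 0" by simp
    have "(1 / norm y) *\<^sub>R y \<in> sphere 0 1" using np by simp
    then have "q ((1 / norm y) *\<^sub>R y) \<le> m" using mx m_def by blast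
    then have "q y / (norm y)^2 \<le> m" using qs by (simp add: power_divide)
    then have "q y \<le> m * (norm y)^2" using np by (simp add: divide_le_eq mult.commute)
    then show ?thesis by (simp add: dot_square_norm)
  qed
  define r where "r = m *\<^sub>R x0 - A *v x0"
  have "r = 0"
  proof (rule ccontr)
    assume "r \<noteq> 0"
    define sr where "sr = r \<bullet> r"
    define k where "k = m * (r \<bullet> r) - q r"
    have sp: "sr > 0" using \<open>r \<noteq> 0\<close> unfolding sr_def by simp
    have g: "0 \<le> 2 * t * sr + t^2 * k" for t
    proof -
      define a where "a = x0 \<bullet> r"
      define b where "b = r \<bullet> (A *v x0)"
      have F1: "q (x0 + t *\<^sub>R r) \<le> m * ((x0 + t *\<^sub>R r) \<bullet> (x0 + t *\<^sub>R r))" by (rule bound)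
      have "q (x0 + t *\<^sub>R r) = q x0 + t * (x0 \<bullet> (A *v r)) + t * (r \<bullet> (A *v x0)) + t^2 * q r"
        unfolding q_def by (simp add: matrix_vector_right_distrib matrix_vector_mult_scaleR
            inner_add_left inner_add_right power2_eq_square algebra_simps)
      moreover have "x0 \<bullet> (A *v r) = r \<bullet> (A *v x0)"
        using sym_inner[OF s, of x0 r] by (simp add: inner_commute)
      ultimately have F2: "q (x0 + t *\<^sub>R r) = m + 2 * t * b + t^2 * q r"
        unfolding m_def b_def by simp
      have F3: "(x0 + t *\<^sub>R r) \<bullet> (x0 + t *\<^sub>R r) = 1 + 2 * t * a + t^2 * sr"
        unfolding a_def sr_def using nx0
        by (simp add: inner_add_left inner_add_right power2_eq_square algebra_simps inner_commute)
      have F4: "sr = m * a - b"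
      proof -
        have "r \<bullet> r = (m *\<^sub>R x0 - A *v x0) \<bullet> r" by (rule arg_cong[where f="\<lambda>z. z \<bullet> r"], rule r_def)
        also have "\<dots> = m * (x0 \<bullet> r) - r \<bullet> (A *v x0)" by (simp add: inner_diff_left inner_diff_right inner_commute)
        finally show ?thesis unfolding sr_def a_def b_def .
      qed
      have "m + 2 * t * b + t^2 * q r \<le> m * (1 + 2 * t * a + t^2 * sr)" using F1 F2 F3 by simp
      also have "\<dots> = m + 2 * t * (m * a) + t^2 * (m * sr)" by (simp add: algebra_simps)
      finally have H: "2 * t * b + t^2 * q r \<le> 2 * t * (m * a) + t^2 * (m * sr)" by simp
      have e1: "2 * t * sr = 2 * t * (m * a) - 2 * t * b" using F4 by (simp add: right_diff_distrib)
      have e2: "t^2 * k = t^2 * (m * sr) - t^2 * q r" unfolding k_def sr_def by (simp add: right_diff_distrib)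
      show ?thesis using H e1 e2 by linarith
    qed
    define K where "K = \<bar>k\<bar> + 1"
    define t where "t = - sr / K"
    have d: "K > 0" unfolding K_def by simp
    have "0 \<le> 2 * t * sr + t^2 * k" by (rule g)
    also have "\<dots> = sr^2 / K * (k / K - 2)"
      unfolding t_def using d by (simp add: field_simps power2_eq_square)
    also have "\<dots> < 0"
    proof (rule mult_pos_neg)
      show "sr^2 / K > 0" using sp d by simp
      have "k < K" unfolding K_def by simp
      then have "k / K < 1" using d by (simp add: divide_less_eq)
      then show "k / K - 2 < 0" by simp
    qed
    finally show False by simp
  qed
  then have "A *v x0 = m *\<^sub>R x0" unfolding r_def by simp
  moreover have "x0 \<noteq> 0" using x0 by auto
  ultimately show ?thesis by blast
qed

lemma largest_eig:
  fixes A :: "real^'n^'n"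
  assumes s: "transpose A = A"
  shows "\<exists>x. x \<noteq> 0 \<and> A *v x = largest_eigenvalue A *\<^sub>R x"
    and "\<And>mu x. x \<noteq> 0 \<Longrightarrow> A *v x = mu *\<^sub>R x \<Longrightarrow> mu \<le> largest_eigenvalue A"
proof -
  let ?S = "{mu. \<exists>x. x \<noteq> 0 \<and> A *v x = mu *\<^sub>R x}"
  have f: "finite ?S" by (rule finite_eigs[OF s])
  have ne: "?S \<noteq> {}" using eig_exists[OF s] by blast
  have "largest_eigenvalue A \<in> ?S" unfolding largest_eigenvalue_def using Max_in[OF f ne] .
  then show "\<exists>x. x \<noteq> 0 \<and> A *v x = largest_eigenvalue A *\<^sub>R x" by simp
  fix mu x assume "x \<noteq> 0" "A *v x = mu *\<^sub>R x"
  then have "mu \<in> ?S" by blast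
  then show "mu \<le> largest_eigenvalue A" unfolding largest_eigenvalue_def using Max_ge[OF f] by blast
qed



lemma form_bound:
  fixes d :: "'v::finite \<Rightarrow> 'v \<Rightarrow> real" and x :: "'v \<Rightarrow> real"
  assumes sym: "\<And>i j. d i j = d j i" and ge: "\<And>i j. i \<noteq> j \<Longrightarrow> d i j \<ge> 1"
  shows "(\<Sum>i\<in>UNIV. (\<Sum>j\<in>UNIV. d i j) * (x i)^2) - (\<Sum>i\<in>UNIV. \<Sum>j\<in>UNIV. d i j * x i * x j)
           \<ge> real CARD('v) * (\<Sum>i\<in>UNIV. (x i)^2) - (\<Sum>i\<in>UNIV. x i)^2"
proof -
  have e1: "(\<Sum>i\<in>UNIV. \<Sum>j\<in>UNIV. d i j * (x i - x j)^2)
      = (\<Sum>i\<in>UNIV. \<Sum>j\<in>UNIV. d i j * (x i)^2) + (\<Sum>i\<in>UNIV. \<Sum>j\<in>UNIV. d i j * (x j)^2) - 2 * (\<Sum>i\<in>UNIV. \<Sum>j\<in>UNIV. d i j * x i * x j)"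
    by (simp add: power2_eq_square algebra_simps sum.distrib sum_subtractf sum_distrib_left)
  have e2: "(\<Sum>i\<in>UNIV. \<Sum>j\<in>UNIV. d i j * (x j)^2) = (\<Sum>i\<in>UNIV. \<Sum>j\<in>UNIV. d i j * (x i)^2)"
    using sum.swap[of "\<lambda>i j. d i j * (x j)^2" UNIV UNIV] sym by simp
  have e3: "(\<Sum>i\<in>UNIV. \<Sum>j\<in>UNIV. d i j * (x i)^2) = (\<Sum>i\<in>UNIV. (\<Sum>j\<in>UNIV. d i j) * (x i)^2)"
    by (simp add: sum_distrib_right)
  have e4: "(\<Sum>i\<in>UNIV. \<Sum>j\<in>UNIV. d i j * (x i - x j)^2) \<ge> (\<Sum>i\<in>UNIV. \<Sum>j\<in>(UNIV::'v set). (x i - x j)^2)"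
  proof (intro sum_mono)
    fix i j :: 'v
    show "(x i - x j)^2 \<le> d i j * (x i - x j)^2"
    proof (cases "i = j")
      case True then show ?thesis by simp
    next
      case False then have "d i j \<ge> 1" by (rule ge)
      then show ?thesis using mult_right_mono[of 1 "d i j" "(x i - x j)^2"] by simp
    qed
  qed
  have e5: "(\<Sum>i\<in>UNIV. \<Sum>j\<in>(UNIV::'v set). (x i - x j)^2) = 2 * real CARD('v) * (\<Sum>i\<in>UNIV. (x i)^2) - 2 * (\<Sum>i\<in>UNIV. x i)^2"
    by (simp add: power2_eq_square algebra_simps sum.distrib sum_subtractf sum_distrib_left sum_distrib_right)
  show ?thesis using e1 e2 e3 e4 e5 by linarith
qed

lemma cs_weight:
  fixes a x :: "'v::finite \<Rightarrow> real"
  assumes pos: "\<And>i. a i > 0" and s1: "(\<Sum>i\<in>UNIV. 1 / a i) \<le> 1"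
  shows "(\<Sum>i\<in>UNIV. x i)^2 \<le> (\<Sum>i\<in>UNIV. a i * (x i)^2)"
proof -
  have "(\<Sum>i\<in>UNIV. (1 / sqrt (a i)) * (sqrt (a i) * x i))^2
        \<le> (\<Sum>i\<in>UNIV. (1 / sqrt (a i))^2) * (\<Sum>i\<in>UNIV. (sqrt (a i) * x i)^2)"
    by (rule Cauchy_Schwarz_ineq_sum)
  moreover have "(1 / sqrt (a i)) * (sqrt (a i) * x i) = x i" for i
    using pos[of i] by simp
  moreover have "(1 / sqrt (a i))^2 = 1 / a i" for i
    using pos[of i] by (simp add: power_divide)
  moreover have "(sqrt (a i) * x i)^2 = a i * (x i)^2" for i
    using pos[of i] by (simp add: power_mult_distrib)
  ultimately have "(\<Sum>i\<in>UNIV. x i)^2 \<le> (\<Sum>i\<in>UNIV. 1 / a i) * (\<Sum>i\<in>UNIV. a i * (x i)^2)" by simp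
  also have "\<dots> \<le> 1 * (\<Sum>i\<in>UNIV. a i * (x i)^2)"
  proof (intro mult_right_mono sum_nonneg)
    show "(\<Sum>i\<in>UNIV. 1 / a i) \<le> 1" by (rule s1)
    fix i show "0 \<le> a i * (x i)^2" using pos[of i] by simp
  qed
  finally show ?thesis by simp
qed

lemma two_weights:
  fixes w x :: "'v::finite \<Rightarrow> real"
  assumes w0: "\<And>i. w i \<ge> 0" and pq: "p \<noteq> q" and wp: "w p \<ge> W" and wq: "w q \<ge> W" and W0: "W \<ge> 0"
    and lam: "lam < real CARD('v)"
    and cond: "2 / (real CARD('v) - lam + W) + (real CARD('v) - 2) / (real CARD('v) - lam) \<le> 1"
  shows "lam * (\<Sum>i\<in>UNIV. (x i)^2) \<le> (\<Sum>i\<in>UNIV. w i * (x i)^2) + real CARD('v) * (\<Sum>i\<in>UNIV. (x i)^2) - (\<Sum>i\<in>UNIV. x i)^2"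
proof -
  define n where "n = real CARD('v)"
  define a where "a i = w i + n - lam" for i
  have apos: "a i > 0" for i using w0[of i] lam unfolding a_def n_def by linarith
  have npos: "n - lam > 0" using lam n_def by simp
  have sub: "{p, q} \<subseteq> (UNIV :: 'v set)" by simp
  have split: "(\<Sum>i\<in>UNIV. 1 / a i) = (\<Sum>i\<in>UNIV - {p, q}. 1 / a i) + (\<Sum>i\<in>{p,q}. 1 / a i)"
    using sum.subset_diff[OF sub] by simp
  have c2: "card (UNIV - {p, q} :: 'v set) = CARD('v) - 2"
    using pq by (simp add: card_Diff_subset)
  have n2: "CARD('v) \<ge> 2"
  proof -
    have "card {p, q} \<le> CARD('v)" by (rule card_mono) auto
    then show ?thesis using pq by simp
  qed
  have r1: "(\<Sum>i\<in>UNIV - {p, q}. 1 / a i) \<le> (\<Sum>i\<in>UNIV - {p, q}. 1 / (n - lam))"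
  proof (rule sum_mono)
    fix i show "1 / a i \<le> 1 / (n - lam)"
      using w0[of i] npos unfolding a_def by (intro divide_left_mono) auto
  qed
  also have "\<dots> = (n - 2) / (n - lam)" using c2 n2 unfolding n_def by (simp add: of_nat_diff)
  finally have r1': "(\<Sum>i\<in>UNIV - {p, q}. 1 / a i) \<le> (n - 2) / (n - lam)" .
  have ap: "1 / a p \<le> 1 / (n - lam + W)" using wp npos W0 unfolding a_def
    by (intro divide_left_mono) auto
  have aq: "1 / a q \<le> 1 / (n - lam + W)" using wq npos W0 unfolding a_def
    by (intro divide_left_mono) auto
  have "(\<Sum>i\<in>{p,q}. 1 / a i) = 1 / a p + 1 / a q" using pq by simp
  then have "(\<Sum>i\<in>UNIV. 1 / a i) \<le> 2 / (n - lam + W) + (n - 2) / (n - lam)"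
    using split r1' ap aq by simp
  then have "(\<Sum>i\<in>UNIV. 1 / a i) \<le> 1" using cond unfolding n_def by simp
  then have "(\<Sum>i\<in>UNIV. x i)^2 \<le> (\<Sum>i\<in>UNIV. a i * (x i)^2)" using cs_weight apos by blast
  also have "\<dots> = (\<Sum>i\<in>UNIV. w i * (x i)^2) + (n - lam) * (\<Sum>i\<in>UNIV. (x i)^2)"
    unfolding a_def by (simp add: algebra_simps sum.distrib sum_distrib_left sum_subtractf)
  finally show ?thesis unfolding n_def by (simp add: algebra_simps)
qed



lemma frac_le1:
  fixes A B C :: real
  assumes "A > 0" "B > 0" "2 * B + C * A \<le> A * B"
  shows "2 / A + C / B \<le> 1"
proof -
  have "2 / A + C / B = (2 * B + C * A) / (A * B)" using assms by (simp add: field_simps)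
  also have "\<dots> \<le> 1" using assms by (simp add: divide_le_eq_1_pos)
  finally show ?thesis .
qed

lemma cond1: "(n::real) \<ge> 3 \<Longrightarrow> 2 / (n - 1/2 + (n - 2)) + (n - 2) / (n - 1/2) \<le> 1"
  by (rule frac_le1) (auto simp: algebra_simps power2_eq_square field_simps)

lemma cond2: "(n::real) \<ge> 3 \<Longrightarrow> 2 / (n - 2/3 + 2 * (n - 2)) + (n - 2) / (n - 2/3) \<le> 1"
  by (rule frac_le1) (auto simp: algebra_simps power2_eq_square field_simps)

lemma gap_gen:
  fixes d :: "'v::finite \<Rightarrow> 'v \<Rightarrow> real" and x T :: "'v \<Rightarrow> real"
  assumes sym: "\<And>i j. d i j = d j i" and ge: "\<And>i j. i \<noteq> j \<Longrightarrow> d i j \<ge> 1"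
    and Tdef: "\<And>i. T i = (\<Sum>j\<in>UNIV. d i j)" and Dm: "\<And>i. T i \<le> Dm"
    and pq: "p \<noteq> q" and wp: "Dm - T p \<ge> real CARD('v) - 2" and wq: "Dm - T q \<ge> real CARD('v) - 2"
    and n3: "real CARD('v) \<ge> 3" and xne: "x kz \<noteq> 0"
  shows "(\<Sum>i\<in>UNIV. x i * (\<Sum>j\<in>UNIV. d i j * x j)) = mu * (\<Sum>i\<in>UNIV. (x i)^2) \<Longrightarrow> Dm - mu \<ge> 1/2"
    and "(\<Sum>i\<in>UNIV. x i * (\<Sum>j\<in>UNIV. d i j * x j)) + (\<Sum>i\<in>UNIV. T i * (x i)^2) = mu * (\<Sum>i\<in>UNIV. (x i)^2)
          \<Longrightarrow> 2 * Dm - mu \<ge> 2/3"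
proof -
  define n where "n = real CARD('v)"
  define X where "X = (\<Sum>i\<in>UNIV. (x i)^2)"
  define P where "P = (\<Sum>i\<in>UNIV. \<Sum>j\<in>UNIV. d i j * x i * x j)"
  define s where "s = (\<Sum>i\<in>UNIV. x i)"
  have Xpos: "X > 0"
  proof -
    have "(x kz)^2 \<le> X" unfolding X_def by (rule member_le_sum) auto
    moreover have "(x kz)^2 > 0" using xne by simp
    ultimately show ?thesis by linarith
  qed
  have Peq: "(\<Sum>i\<in>UNIV. x i * (\<Sum>j\<in>UNIV. d i j * x j)) = P"
    unfolding P_def by (simp add: sum_distrib_left mult_ac)
  have FB: "(\<Sum>i\<in>UNIV. T i * (x i)^2) - P \<ge> n * X - s^2"
    using form_bound[OF sym ge, where x = x] unfolding P_def n_def X_def s_def Tdef by simp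
  have TX: "(\<Sum>i\<in>UNIV. (Dm - T i) * (x i)^2) + (\<Sum>i\<in>UNIV. T i * (x i)^2) = Dm * X"
    unfolding X_def by (simp add: algebra_simps sum.distrib sum_subtractf sum_distrib_left)
  have w0: "\<And>i. Dm - T i \<ge> 0" using Dm by simp
  show "Dm - mu \<ge> 1/2" if eq: "(\<Sum>i\<in>UNIV. x i * (\<Sum>j\<in>UNIV. d i j * x j)) = mu * (\<Sum>i\<in>UNIV. (x i)^2)"
  proof -
    have "1/2 * X \<le> (\<Sum>i\<in>UNIV. (Dm - T i) * (x i)^2) + n * X - s^2"
      unfolding X_def n_def s_def
    proof (rule two_weights[where W = "real CARD('v) - 2" and p = p and q = q])
      show "2 / (real CARD('v) - 1/2 + (real CARD('v) - 2)) + (real CARD('v) - 2) / (real CARD('v) - 1/2) \<le> 1"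
        using cond1 n3 by blast
    qed (use w0 pq wp wq n3 in auto)
    then have "1/2 * X \<le> Dm * X - mu * X" using FB TX eq Peq unfolding X_def by linarith
    then have "1/2 * X \<le> (Dm - mu) * X" by (simp add: algebra_simps)
    then show ?thesis using Xpos by (simp add: mult_le_cancel_right)
  qed
  show "2 * Dm - mu \<ge> 2/3" if eq: "(\<Sum>i\<in>UNIV. x i * (\<Sum>j\<in>UNIV. d i j * x j)) + (\<Sum>i\<in>UNIV. T i * (x i)^2) = mu * (\<Sum>i\<in>UNIV. (x i)^2)"
  proof -
    have "2/3 * X \<le> (\<Sum>i\<in>UNIV. (2 * (Dm - T i)) * (x i)^2) + n * X - s^2"
      unfolding X_def n_def s_def
    proof (rule two_weights[where W = "2 * (real CARD('v) - 2)" and p = p and q = q])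
      show "2 / (real CARD('v) - 2/3 + 2 * (real CARD('v) - 2)) + (real CARD('v) - 2) / (real CARD('v) - 2/3) \<le> 1"
        using cond2 n3 by blast
    qed (use w0 pq wp wq n3 in auto)
    moreover have "(\<Sum>i\<in>UNIV. (2 * (Dm - T i)) * (x i)^2) = 2 * (\<Sum>i\<in>UNIV. (Dm - T i) * (x i)^2)"
      by (simp add: sum_distrib_left del: mult_2 mult_2_right) (rule sum.cong, auto simp: algebra_simps)
    ultimately have "2/3 * X \<le> 2 * Dm * X - mu * X" using FB TX eq Peq unfolding X_def by linarith
    then have "2/3 * X \<le> (2 * Dm - mu) * X" by (simp add: algebra_simps)
    then show ?thesis using Xpos by (simp add: mult_le_cancel_right)
  qed
qed



lemma tree_facts:
  assumes "is_tree E"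
  shows "\<And>u v. E u v \<Longrightarrow> E v u" "\<And>v. \<not> E v v" "graph_connected E"
  using assms unfolding is_tree_def simple_graph_def by auto

lemma dm_entry: "dist_matrix E $ i $ j = real (gdist E i j)"
  by (simp add: dist_matrix_def)

lemma trans_eq: "transmission E i = (\<Sum>j\<in>UNIV. real (gdist E i j))"
  by (simp add: transmission_def dist_matrix_def)

lemma Q_entry: "dist_signless_laplacian E $ i $ j = real (gdist E i j) + (if i = j then transmission E i else 0)"
  by (simp add: dist_signless_laplacian_def dist_matrix_def)

lemma Dmax_ge: "transmission E i \<le> Dmax E"
  unfolding Dmax_def by (rule Max_ge) auto

lemma eig_coord:
  fixes M :: "real^'n^'n"
  assumes "M *v x = mu *\<^sub>R x"
  shows "(\<Sum>j\<in>UNIV. M$i$j * x$j) = mu * x$i"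
proof -
  have "(M *v x) $ i = (mu *\<^sub>R x) $ i" using assms by simp
  then show ?thesis by (simp add: matrix_vector_mult_def)
qed

lemma eig_quad:
  fixes M :: "real^'n^'n"
  assumes "M *v x = mu *\<^sub>R x"
  shows "(\<Sum>i\<in>UNIV. x$i * (\<Sum>j\<in>UNIV. M$i$j * x$j)) = mu * (\<Sum>i\<in>UNIV. (x$i)^2)"
proof -
  have "(\<Sum>i\<in>UNIV. x$i * (\<Sum>j\<in>UNIV. M$i$j * x$j)) = (\<Sum>i\<in>UNIV. mu * (x$i)^2)"
    using eig_coord[OF assms] by (intro sum.cong) (auto simp: power2_eq_square)
  then show ?thesis by (simp add: sum_distrib_left)
qed

lemma D_sym:
  assumes "is_tree E" shows "transpose (dist_matrix E) = dist_matrix E"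
  using gdist_sym[OF tree_facts(1)[OF assms] tree_facts(3)[OF assms]]
  by (simp add: vec_eq_iff transpose_def dist_matrix_def)

lemma Q_sym:
  assumes "is_tree E" shows "transpose (dist_signless_laplacian E) = dist_signless_laplacian E"
  using D_sym[OF assms]
  by (simp add: vec_eq_iff transpose_def dist_signless_laplacian_def)

lemma nonzero_coord: "(x :: real^'n) \<noteq> 0 \<Longrightarrow> \<exists>i. x $ i \<noteq> 0"
  by (simp add: vec_eq_iff)

lemma Q_row:
  "(\<Sum>j\<in>UNIV. dist_signless_laplacian E $ i $ j * x$j)
     = (\<Sum>j\<in>UNIV. real (gdist E i j) * x$j) + transmission E i * x$i"
proof -
  have "(\<Sum>j\<in>UNIV. dist_signless_laplacian E $ i $ j * x$j)
     = (\<Sum>j\<in>UNIV. real (gdist E i j) * x$j + (if j = i then transmission E i * x$j else 0))"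
    by (intro sum.cong) (auto simp: Q_entry algebra_simps)
  also have "\<dots> = (\<Sum>j\<in>UNIV. real (gdist E i j) * x$j) + transmission E i * x$i"
    by (simp add: sum.distrib)
  finally show ?thesis .
qed

lemma nonstar:
  fixes E :: "'v::finite \<Rightarrow> 'v \<Rightarrow> bool"
  assumes tree: "is_tree E" and n2: "2 \<le> CARD('v)" and nst: "\<not> is_star E"
  shows "Dmax E - largest_eigenvalue (dist_matrix E) \<ge> 1/2"
    and "2 * Dmax E - largest_eigenvalue (dist_signless_laplacian E) \<ge> 2/3"
proof -
  note sym = tree_facts(1)[OF tree] and irr = tree_facts(2)[OF tree] and c = tree_facts(3)[OF tree]
  obtain u1 p1 u2 p2 where l1: "\<forall>y. E u1 y \<longleftrightarrow> y = p1" and l2: "\<forall>y. E u2 y \<longleftrightarrow> y = p2"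
    and pq: "p1 \<noteq> p2" and n4: "4 \<le> CARD('v)"
    using tree_cases[OF tree n2] nst by blast
  have leafT: "Dmax E - transmission E p \<ge> real CARD('v) - 2" if lf: "\<forall>y. E u y \<longleftrightarrow> y = p" for u p
  proof -
    have up: "u \<noteq> p" using lf irr by metis
    have g: "gdist E u j = Suc (gdist E p j)" if "j \<noteq> u" for j
      using gdist_leaf[OF c _ that] lf by blast
    have gpu: "gdist E p u = 1" using gdist_sym[OF sym c, of p u] g[of p] up gdist_self[of E p] by simp
    define h where "h j = 1 + real (gdist E p j)" for j
    have "transmission E u = (\<Sum>j\<in>UNIV. real (gdist E u j))" by (rule trans_eq)
    also have "\<dots> = real (gdist E u u) + (\<Sum>j\<in>UNIV - {u}. real (gdist E u j))"
      by (simp add: sum.remove)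
    also have "(\<Sum>j\<in>UNIV - {u}. real (gdist E u j)) = (\<Sum>j\<in>UNIV - {u}. h j)"
      using g unfolding h_def by (intro sum.cong) auto
    also have "(\<Sum>j\<in>UNIV - {u}. h j) = (\<Sum>j\<in>UNIV. h j) - h u"
      using sum.remove[of UNIV u h] by simp
    also have "(\<Sum>j\<in>UNIV. h j) = real CARD('v) + transmission E p"
      unfolding h_def by (simp add: sum.distrib trans_eq)
    finally have "transmission E u = real CARD('v) + transmission E p - 2"
      using gpu gdist_self[of E u] unfolding h_def by simp
    moreover have "transmission E u \<le> Dmax E" by (rule Dmax_ge)
    ultimately show ?thesis by simp
  qed
  have wp: "Dmax E - transmission E p1 \<ge> real CARD('v) - 2" using leafT l1 by blast
  have wq: "Dmax E - transmission E p2 \<ge> real CARD('v) - 2" using leafT l2 by blast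
  have n3: "real CARD('v) \<ge> 3" using n4 by simp
  have dsym: "\<And>i j. real (gdist E i j) = real (gdist E j i)" using gdist_sym[OF sym c] by simp
  have dge: "\<And>i j. i \<noteq> j \<Longrightarrow> real (gdist E i j) \<ge> 1"
  proof -
    fix i j :: 'v assume "i \<noteq> j"
    then have "gdist E i j \<noteq> 0" using gdist_0[OF c] by blast
    then show "real (gdist E i j) \<ge> 1" by simp
  qed
  obtain x where x: "x \<noteq> 0" "dist_matrix E *v x = largest_eigenvalue (dist_matrix E) *\<^sub>R x"
    using largest_eig(1)[OF D_sym[OF tree]] by blast
  obtain i0 where i0: "x $ i0 \<noteq> 0" using nonzero_coord[OF x(1)] by blast
  show "Dmax E - largest_eigenvalue (dist_matrix E) \<ge> 1/2"
    apply (rule gap_gen(1)[where d = "\<lambda>i j. real (gdist E i j)" and T = "transmission E" and Dm = "Dmax E"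
          and p = p1 and q = p2 and x = "\<lambda>i. x $ i" and kz = i0])
    apply (rule dsym) apply (rule dge, assumption) apply (rule trans_eq) apply (rule Dmax_ge)
    apply (rule pq) apply (rule wp) apply (rule wq) apply (rule n3) apply (rule i0)
    using eig_quad[OF x(2)] apply (simp add: dm_entry)
    done
  obtain y where y: "y \<noteq> 0" "dist_signless_laplacian E *v y = largest_eigenvalue (dist_signless_laplacian E) *\<^sub>R y"
    using largest_eig(1)[OF Q_sym[OF tree]] by blast
  obtain j0 where j0: "y $ j0 \<noteq> 0" using nonzero_coord[OF y(1)] by blast
  have "(\<Sum>i\<in>UNIV. y$i * (\<Sum>j\<in>UNIV. dist_signless_laplacian E $ i $ j * y$j))
      = (\<Sum>i\<in>UNIV. y$i * (\<Sum>j\<in>UNIV. real (gdist E i j) * y$j)) + (\<Sum>i\<in>UNIV. transmission E i * (y$i)^2)"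
  proof -
    have "(\<Sum>i\<in>UNIV. y$i * (\<Sum>j\<in>UNIV. dist_signless_laplacian E $ i $ j * y$j))
        = (\<Sum>i\<in>UNIV. y$i * (\<Sum>j\<in>UNIV. real (gdist E i j) * y$j) + transmission E i * (y$i)^2)"
      by (intro sum.cong) (simp_all only: Q_row, simp add: algebra_simps power2_eq_square)
    then show ?thesis by (simp add: sum.distrib)
  qed
  then show "2 * Dmax E - largest_eigenvalue (dist_signless_laplacian E) \<ge> 2/3"
    apply (intro gap_gen(2)[where d = "\<lambda>i j. real (gdist E i j)" and T = "transmission E" and Dm = "Dmax E"
          and p = p1 and q = p2 and x = "\<lambda>i. y $ i" and kz = j0])
    apply (rule dsym) apply (rule dge, assumption) apply (rule trans_eq) apply (rule Dmax_ge)
    apply (rule pq) apply (rule wp) apply (rule wq) apply (rule n3) apply (rule j0)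
    using eig_quad[OF y(2)] apply simp
    done
qed

lemma exists_other:
  assumes "2 \<le> CARD('v::finite)" shows "\<exists>l::'v. l \<noteq> c"
proof (rule ccontr)
  assume "\<not> (\<exists>l::'v. l \<noteq> c)"
  then have "UNIV = {c}" by auto
  then have "card (UNIV :: 'v set) = card {c}" by (rule arg_cong)
  then show False using assms by simp
qed

lemma star_solve:
  fixes x :: "'v::finite \<Rightarrow> real" and c :: 'v
  assumes ne: "x kz \<noteq> 0" and n2: "2 \<le> CARD('v)"
    and eqc: "mu * x c = (\<Sum>j\<in>UNIV. x j) + a * x c"
    and eql: "\<And>l. l \<noteq> c \<Longrightarrow> mu * x l = 2 * (\<Sum>j\<in>UNIV. x j) + k * x l - x c"
  shows "mu = k \<or> (mu - a - 1) * (mu - k - 2 * (real CARD('v) - 1)) = real CARD('v) - 1"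
proof (cases "mu = k")
  case True then show ?thesis by simp
next
  case False
  then have nk: "mu \<noteq> k" .
  define n where "n = real CARD('v)"
  define tot where "tot = (\<Sum>j\<in>UNIV. x j)"
  obtain l0 :: 'v where l0: "l0 \<noteq> c" using exists_other[OF n2] by blast
  define b where "b = x l0"
  have xl: "x l = b" if "l \<noteq> c" for l
  proof -
    have "(mu - k) * x l = 2 * tot - x c" using eql[OF that] unfolding tot_def by (simp add: algebra_simps)
    moreover have "(mu - k) * x l0 = 2 * tot - x c" using eql[OF l0] unfolding tot_def by (simp add: algebra_simps)
    ultimately have "(mu - k) * x l = (mu - k) * x l0" by simp
    then show ?thesis using nk unfolding b_def by simp
  qed
  have "tot = x c + (\<Sum>j\<in>UNIV - {c}. x j)" unfolding tot_def by (simp add: sum.remove)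
  also have "(\<Sum>j\<in>UNIV - {c}. x j) = (\<Sum>j\<in>UNIV - {c}. b)" using xl by (intro sum.cong) auto
  also have "\<dots> = (n - 1) * b" unfolding n_def using n2 by (simp add: card_Diff_subset of_nat_diff)
  finally have tot: "tot = x c + (n - 1) * b" .
  have e1: "(mu - a - 1) * x c = (n - 1) * b" using eqc tot unfolding tot_def by (simp add: algebra_simps)
  have "mu * b = 2 * tot + k * b - x c" using eql[OF l0] unfolding tot_def b_def by simp
  then have e2: "x c = (mu - k - 2 * (n - 1)) * b" using tot by (simp add: algebra_simps)
  have bnz: "b \<noteq> 0"
  proof
    assume "b = 0"
    then have "x c = 0" using e2 by simp
    then have "x j = 0" for j using xl \<open>b = 0\<close> by (cases "j = c") auto
    then show False using ne by simp
  qed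
  have "(mu - a - 1) * (mu - k - 2 * (n - 1)) * b = (n - 1) * b" using e1 e2 by (simp add: mult_ac)
  then have "(mu - a - 1) * (mu - k - 2 * (real CARD('v) - 1)) = real CARD('v) - 1"
    using bnz unfolding n_def by simp
  then show ?thesis by simp
qed

lemma star_gdist:
  assumes c: "graph_connected E" and cE: "\<And>u v. E u v \<longleftrightarrow> u \<noteq> v \<and> (u = ctr \<or> v = ctr)"
  shows "gdist E i j = (if i = j then 0 else if i = ctr \<or> j = ctr then 1 else 2)"
proof (cases "i = j")
  case True then show ?thesis by (simp add: gdist_self)
next
  case False
  then have nz: "gdist E i j \<noteq> 0" using gdist_0[OF c] by blast
  show ?thesis
  proof (cases "i = ctr \<or> j = ctr")
    case True
    then have "E i j" using cE False by blast
    then have "gdist E i j \<le> 1" by (rule gdist_edge_le)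
    then show ?thesis using nz False True by simp
  next
    case F2: False
    then have "\<not> E i j" using cE by blast
    then have n1: "gdist E i j \<noteq> 1" using gdist_1[OF c] by blast
    have "is_walk E [i, ctr, j]" using F2 cE by (auto simp: is_walk_Cons is_walk_single)
    then have "gdist E i j \<le> length [i, ctr, j] - 1" by (rule gdist_le) auto
    then show ?thesis using nz n1 False F2 by simp
  qed
qed

lemma star_largest:
  fixes M :: "real^'v::finite^'v"
  assumes sM: "transpose M = M" and n2: "2 \<le> CARD('v)"
    and rc: "\<And>x. (\<Sum>j\<in>UNIV. M$ctr$j * x$j) = (\<Sum>j\<in>UNIV. x$j) + a * x$ctr"
    and rl: "\<And>l x. l \<noteq> ctr \<Longrightarrow> (\<Sum>j\<in>UNIV. M$l$j * x$j) = 2 * (\<Sum>j\<in>UNIV. x$j) + k * x$l - x$ctr"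
    and root: "(\<beta> - a - 1) * (\<beta> - k - 2 * (real CARD('v) - 1)) = real CARD('v) - 1"
    and kb: "k \<le> \<beta>"
    and up: "\<And>mu. (mu - a - 1) * (mu - k - 2 * (real CARD('v) - 1)) = real CARD('v) - 1 \<Longrightarrow> mu \<le> \<beta>"
  shows "largest_eigenvalue M = \<beta>"
proof (rule antisym)
  obtain x where x: "x \<noteq> 0" "M *v x = largest_eigenvalue M *\<^sub>R x"
    using largest_eig(1)[OF sM] by blast
  obtain i0 where i0: "x $ i0 \<noteq> 0" using nonzero_coord[OF x(1)] by blast
  have "largest_eigenvalue M = k \<or> (largest_eigenvalue M - a - 1) * (largest_eigenvalue M - k - 2 * (real CARD('v) - 1)) = real CARD('v) - 1"
  proof (rule star_solve[where x = "\<lambda>j. x $ j" and kz = i0 and c = ctr])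
    show "x $ i0 \<noteq> 0" by (rule i0)
    show "2 \<le> CARD('v)" by (rule n2)
    show "largest_eigenvalue M * x $ ctr = (\<Sum>j\<in>UNIV. x $ j) + a * x $ ctr"
      using eig_coord[OF x(2), of ctr] rc[of x] by simp
    fix l :: 'v assume "l \<noteq> ctr"
    then show "largest_eigenvalue M * x $ l = 2 * (\<Sum>j\<in>UNIV. x $ j) + k * x $ l - x $ ctr"
      using eig_coord[OF x(2), of l] rl[of l x] by simp
  qed
  then show "largest_eigenvalue M \<le> \<beta>" using kb up by auto
next
  define n where "n = real CARD('v)"
  define v where "v = \<beta> - k - 2 * (n - 1)"
  define x0 :: "real^'v" where "x0 = (\<chi> i. if i = ctr then v else 1)"
  have tot: "(\<Sum>j\<in>UNIV. x0$j) = v + n - 1"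
  proof -
    have "(\<Sum>j\<in>UNIV. x0$j) = (\<Sum>j\<in>UNIV. 1 + (if j = ctr then v - 1 else 0))"
      unfolding x0_def by (intro sum.cong) auto
    then show ?thesis unfolding n_def by (simp add: sum.distrib)
  qed
  have "M *v x0 = \<beta> *\<^sub>R x0"
  proof (subst vec_eq_iff, intro allI)
    fix i
    show "(M *v x0) $ i = (\<beta> *\<^sub>R x0) $ i"
    proof (cases "i = ctr")
      case True
      have "(M *v x0) $ i = v + n - 1 + a * v"
        using rc[of x0] tot True unfolding x0_def by (simp add: matrix_vector_mult_def)
      also have "\<dots> = \<beta> * v" using root unfolding v_def n_def by (simp add: algebra_simps)
      finally show ?thesis using True unfolding x0_def by simp
    next
      case False
      have "(M *v x0) $ i = 2 * (v + n - 1) + k - v"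
        using rl[OF False, of x0] tot False unfolding x0_def by (simp add: matrix_vector_mult_def)
      also have "\<dots> = \<beta>" unfolding v_def by (simp add: algebra_simps)
      finally show ?thesis using False unfolding x0_def by simp
    qed
  qed
  moreover have "x0 \<noteq> 0"
  proof -
    obtain l0 :: 'v where "l0 \<noteq> ctr" using exists_other[OF n2] by blast
    then have "x0 $ l0 = 1" unfolding x0_def by simp
    then show ?thesis by auto
  qed
  ultimately show "\<beta> \<le> largest_eigenvalue M" using largest_eig(2)[OF sM] by blast
qed

lemma sqrt_upper:
  fixes y s :: real
  assumes "y^2 = s" shows "y \<le> sqrt s"
proof -
  have "sqrt s = \<bar>y\<bar>" using assms by (metis real_sqrt_abs)
  then show ?thesis by simp
qed

lemma star_case:
  fixes E :: "'v::finite \<Rightarrow> 'v \<Rightarrow> bool"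
  assumes tree: "is_tree E" and n2: "2 \<le> CARD('v)" and st: "is_star E"
  defines "n \<equiv> real CARD('v)"
  shows "Dmax E - largest_eigenvalue (dist_matrix E) = (2*n - 2 - sqrt (4*n^2 - 12*n + 12)) / 2"
    and "2 * Dmax E - largest_eigenvalue (dist_signless_laplacian E) = (3*n - 4 - sqrt (9*n^2 - 32*n + 32)) / 2"
proof -
  note c = tree_facts(3)[OF tree]
  obtain ctr where cE: "\<And>u v. E u v \<longleftrightarrow> u \<noteq> v \<and> (u = ctr \<or> v = ctr)"
    using st unfolding is_star_def by blast
  note gd = star_gdist[OF c cE]
  have n2r: "n \<ge> 2" using n2 unfolding n_def by simp
  have rowc: "(\<Sum>j\<in>UNIV. real (gdist E ctr j) * f j) = (\<Sum>j\<in>UNIV. f j) - f ctr" for f :: "'v \<Rightarrow> real"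
  proof -
    have "(\<Sum>j\<in>UNIV. real (gdist E ctr j) * f j) = (\<Sum>j\<in>UNIV. f j - (if j = ctr then f j else 0))"
      by (intro sum.cong) (auto simp: gd)
    then show ?thesis by (simp add: sum_subtractf)
  qed
  have rowl: "(\<Sum>j\<in>UNIV. real (gdist E l j) * f j) = 2 * (\<Sum>j\<in>UNIV. f j) - 2 * f l - f ctr"
    if "l \<noteq> ctr" for l and f :: "'v \<Rightarrow> real"
  proof -
    have "(\<Sum>j\<in>UNIV. real (gdist E l j) * f j)
        = (\<Sum>j\<in>UNIV. 2 * f j - (if j = l then 2 * f j else 0) - (if j = ctr then f j else 0))"
      using that by (intro sum.cong) (auto simp: gd)
    then show ?thesis by (simp add: sum_subtractf sum_distrib_left)
  qed
  have Tc: "transmission E ctr = n - 1" using rowc[of "\<lambda>_. 1"] by (simp add: trans_eq n_def)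
  have Tl: "transmission E l = 2*n - 3" if "l \<noteq> ctr" for l
    using rowl[OF that, of "\<lambda>_. 1"] by (simp add: trans_eq n_def)
  obtain l0 :: 'v where l0: "l0 \<noteq> ctr" using exists_other[OF n2] by blast
  have Dm: "Dmax E = 2*n - 3"
    unfolding Dmax_def
  proof (rule Max_eqI)
    show "finite (range (transmission E))" by simp
    fix y assume "y \<in> range (transmission E)"
    then obtain i where "y = transmission E i" by auto
    then show "y \<le> 2*n - 3" using Tc Tl n2r by (cases "i = ctr") auto
  next
    show "2*n - 3 \<in> range (transmission E)" using Tl[OF l0] by (metis rangeI)
  qed
  have nn: "n = real CARD('v)" by (simp add: n_def)
  define s where "s = sqrt (n^2 - 3*n + 3)"
  have p3: "n^2 - 3*n + 3 \<ge> 0"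
  proof -
    have "n^2 - 3*n + 3 = (n - 3/2)^2 + 3/4" by (simp add: power2_eq_square algebra_simps)
    moreover have "(n - 3/2)^2 \<ge> 0" by simp
    ultimately show ?thesis by linarith
  qed
  have s2: "s^2 = n^2 - 3*n + 3" using p3 unfolding s_def by simp
  have s0: "s \<ge> 0" using p3 unfolding s_def by simp
  have LD: "largest_eigenvalue (dist_matrix E) = n - 2 + s"
  proof (rule star_largest[where ctr = ctr and a = "-1" and k = "-2"])
    show "transpose (dist_matrix E) = dist_matrix E" by (rule D_sym[OF tree])
    show "2 \<le> CARD('v)" by (rule n2)
    show "(\<Sum>j\<in>UNIV. dist_matrix E $ ctr $ j * x $ j) = (\<Sum>j\<in>UNIV. x $ j) + - 1 * x $ ctr" for x :: "real^'v"
      using rowc[of "\<lambda>j. x $ j"] by (simp add: dm_entry)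
    show "(\<Sum>j\<in>UNIV. dist_matrix E $ l $ j * x $ j) = 2 * (\<Sum>j\<in>UNIV. x $ j) + - 2 * x $ l - x $ ctr"
      if "l \<noteq> ctr" for l and x :: "real^'v"
      using rowl[OF that, of "\<lambda>j. x $ j"] by (simp add: dm_entry)
    show "(n - 2 + s - - 1 - 1) * (n - 2 + s - - 2 - 2 * (real CARD('v) - 1)) = real CARD('v) - 1"
      unfolding nn[symmetric] using s2 by (simp add: algebra_simps power2_eq_square)
    show "- 2 \<le> n - 2 + s" using n2r s0 by simp
    fix mu assume "(mu - - 1 - 1) * (mu - - 2 - 2 * (real CARD('v) - 1)) = real CARD('v) - 1"
    then have "(mu - (n - 2))^2 = n^2 - 3*n + 3" unfolding nn[symmetric]
      by (simp add: algebra_simps power2_eq_square)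
    then have "mu - (n - 2) \<le> s" unfolding s_def by (rule sqrt_upper)
    then show "mu \<le> n - 2 + s" by simp
  qed
  have "sqrt (4*n^2 - 12*n + 12) = 2 * s"
  proof -
    have "sqrt (4*n^2 - 12*n + 12) = sqrt (4 * (n^2 - 3*n + 3))" by (rule arg_cong[where f=sqrt]) simp
    also have "\<dots> = sqrt 4 * s" unfolding s_def by (rule real_sqrt_mult)
    finally show ?thesis by simp
  qed
  then show "Dmax E - largest_eigenvalue (dist_matrix E) = (2*n - 2 - sqrt (4*n^2 - 12*n + 12)) / 2"
    using Dm LD by simp
  define sq where "sq = sqrt (9*n^2 - 32*n + 32)"
  have p9: "9*n^2 - 32*n + 32 \<ge> 0"
  proof -
    have "9*n^2 - 32*n + 32 = (3*n - 16/3)^2 + 32/9" by (simp add: power2_eq_square algebra_simps)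
    moreover have "(3*n - 16/3)^2 \<ge> 0" by simp
    ultimately show ?thesis by linarith
  qed
  have sq2: "sq^2 = 9*n^2 - 32*n + 32" using p9 unfolding sq_def by simp
  have sq0: "sq \<ge> 0" using p9 unfolding sq_def by simp
  have LQ: "largest_eigenvalue (dist_signless_laplacian E) = ((5*n - 8) + sq) / 2"
  proof (rule star_largest[where ctr = ctr and a = "n - 2" and k = "2*n - 5"])
    show "transpose (dist_signless_laplacian E) = dist_signless_laplacian E" by (rule Q_sym[OF tree])
    show "2 \<le> CARD('v)" by (rule n2)
    show "(\<Sum>j\<in>UNIV. dist_signless_laplacian E $ ctr $ j * x $ j) = (\<Sum>j\<in>UNIV. x $ j) + (n - 2) * x $ ctr"
      for x :: "real^'v"
      using rowc[of "\<lambda>j. x $ j"] by (subst Q_row, subst Tc) (simp add: algebra_simps)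
    show "(\<Sum>j\<in>UNIV. dist_signless_laplacian E $ l $ j * x $ j) = 2 * (\<Sum>j\<in>UNIV. x $ j) + (2*n - 5) * x $ l - x $ ctr"
      if "l \<noteq> ctr" for l and x :: "real^'v"
      using rowl[OF that, of "\<lambda>j. x $ j"] by (subst Q_row, subst Tl[OF that]) (simp add: algebra_simps)
    have "4 * ((((5*n - 8) + sq) / 2 - (n - 2) - 1) * (((5*n - 8) + sq) / 2 - (2*n - 5) - 2 * (n - 1)) - (n - 1))
        = sq^2 - (9*n^2 - 32*n + 32)"
      by (simp add: algebra_simps power2_eq_square field_simps)
    then show "(((5*n - 8) + sq) / 2 - (n - 2) - 1) * (((5*n - 8) + sq) / 2 - (2*n - 5) - 2 * (real CARD('v) - 1)) = real CARD('v) - 1"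
      unfolding nn[symmetric] using sq2 by simp
    show "2*n - 5 \<le> ((5*n - 8) + sq) / 2" using n2r sq0 by simp
    fix mu assume "(mu - (n - 2) - 1) * (mu - (2*n - 5) - 2 * (real CARD('v) - 1)) = real CARD('v) - 1"
    then have h: "(mu - (n - 2) - 1) * (mu - (2*n - 5) - 2 * (n - 1)) = n - 1" unfolding nn[symmetric] .
    have "(2*mu - (5*n - 8))^2 - (9*n^2 - 32*n + 32) = 4 * ((mu - (n - 2) - 1) * (mu - (2*n - 5) - 2 * (n - 1)) - (n - 1))"
      by (simp add: algebra_simps power2_eq_square)
    then have "(2*mu - (5*n - 8))^2 = 9*n^2 - 32*n + 32" using h by simp
    then have "2*mu - (5*n - 8) \<le> sq" unfolding sq_def by (rule sqrt_upper)
    then show "mu \<le> ((5*n - 8) + sq) / 2" by simp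
  qed
  show "2 * Dmax E - largest_eigenvalue (dist_signless_laplacian E) = (3*n - 4 - sqrt (9*n^2 - 32*n + 32)) / 2"
    using Dm LQ unfolding sq_def by (simp add: field_simps)
qed


theorem theorem2:
  fixes E :: "'v::finite \<Rightarrow> 'v \<Rightarrow> bool"
  assumes "is_tree E" and "CARD('v) \<ge> 2"
  defines "n \<equiv> real CARD('v)"
  shows "(Dmax E - largest_eigenvalue (dist_matrix E)
           \<ge> (2*n - 2 - sqrt (4*n^2 - 12*n + 12)) / 2) \<and>
         (2 * Dmax E - largest_eigenvalue (dist_signless_laplacian E)
           \<ge> (3*n - 4 - sqrt (9*n^2 - 32*n + 32)) / 2) \<and>
         (Dmax E - largest_eigenvalue (dist_matrix E)
           = (2*n - 2 - sqrt (4*n^2 - 12*n + 12)) / 2 \<longleftrightarrow> is_star E) \<and>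
         (2 * Dmax E - largest_eigenvalue (dist_signless_laplacian E)
           = (3*n - 4 - sqrt (9*n^2 - 32*n + 32)) / 2 \<longleftrightarrow> is_star E)"
proof (cases "is_star E")
  case True
  show ?thesis using star_case[OF assms(1) assms(2) True] True unfolding n_def by simp
next
  case False
  have A: "Dmax E - largest_eigenvalue (dist_matrix E) \<ge> 1/2"
    and B: "2 * Dmax E - largest_eigenvalue (dist_signless_laplacian E) \<ge> 2/3"
    using nonstar[OF assms(1) assms(2) False] by auto
  have n2: "n \<ge> 2" using assms(2) unfolding n_def by simp
  have "2*n - 3 < sqrt (4*n^2 - 12*n + 12)"
    by (rule real_less_rsqrt) (simp add: power2_eq_square algebra_simps)
  then have c1: "(2*n - 2 - sqrt (4*n^2 - 12*n + 12)) / 2 < 1/2" by simp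
  have "3*n - 16/3 < sqrt (9*n^2 - 32*n + 32)"
    by (rule real_less_rsqrt) (simp add: power2_eq_square algebra_simps)
  then have c2: "(3*n - 4 - sqrt (9*n^2 - 32*n + 32)) / 2 < 2/3" by simp
  show ?thesis using A B c1 c2 False by auto
qed

end
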